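(* Let $\boldsymbol s\in S_{m|n}$ and $\boldsymbol y=(y_1,\dots,y_{m+n-1})$ a sequence of polynomials, $i\in\{1,\dots,m+n-1\}$, and suppose there exists a polynomial $\tilde y_i$ satisfying $\mathrm{Wr}^{s_i}(y_i,\tilde y_i)=T_i^{\boldsymbol s}(T_{i+1}^{\boldsymbol s})^{-1}y_{i-1}[-s_i]y_{i+1}$ if $s_i=s_{i+1}$, or $y_i\tilde y_i[-s_i]=\varphi_i^{\boldsymbol s}y_{i-1}[-s_i]y_{i+1}-\psi_i^{\boldsymbol s}y_{i-1}y_{i+1}[-s_i]$ if $s_i=-s_{i+1}$. Let $\boldsymbol y^{[i]}=(y_1,\dots,\tilde y_i,\dots,y_{m+n-1})$, and $\boldsymbol s'=\boldsymbol s$ if $s_i=s_{i+1}$, $\boldsymbol s'=\boldsymbol s^{[i]}$ if $s_i=-s_{i+1}$. Then $\mathcal E^{\boldsymbol s}_{\boldsymbol y}(x)=\mathcal E^{\boldsymbol s'}_{\boldsymbol y^{[i]}}(x)$.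
   Context: Fix $h\in\mathbb{C}^\times$, $m,n\ge0$; $f[i](x)=f(x-ih)$; $\mathrm{Wr}^{\epsilon}(g_1,g_2)=g_1g_2[-\epsilon]-g_2g_1[-\epsilon]$. $S_{m|n}$: $\boldsymbol s\in\{\pm1\}^{m+n}$ with $m$ entries $1$; $\sigma_{\boldsymbol s}(i)=\#\{j\le i:s_j=1\}$ if $s_i=1$, $m+\#\{j\le i:s_j=-1\}$ if $s_i=-1$; $\boldsymbol s^{[i]}$ swaps entries $i,i+1$. Polynomial weights $\lambda\in\mathbb{Z}^{m+n}_{\ge0}$ ($\lambda_1\ge\dots\ge\lambda_m$, $\lambda_{m+1}\ge\dots\ge\lambda_{m+n}$, $\lambda_{m+k}=0$ for $k>\lambda_m$); $\lambda^{\boldsymbol s}_i$ the eigenvalue of $e_{\sigma_{\boldsymbol s}(i)\sigma_{\boldsymbol s}(i)}$ on the unique-up-to-scalar nonzero $v\in L_\lambda$ with $e_{\sigma_{\boldsymbol s}(a)\sigma_{\boldsymbol s}(b)}v=0$ for $a<b$; for $\boldsymbol\lambda=(\lambda^{(1)},\dots,\lambda^{(p)})$, $\lambda_i^{(k,\boldsymbol s)}=(\lambda^{(k)})^{\boldsymbol s}_i$. $\boldsymbol z\in\mathbb{C}^p$ $h$-generic ($z_i-z_j\notin h\mathbb{Z}$). $T_i^{\boldsymbol s}=\prod_k\prod_{j=1}^{\lambda_i^{(k,\boldsymbol s)}}(x-z_k+s_ijh)$; for $s_i\ne s_{i+1}$, $\varphi_i^{\boldsymbol s}=\prod_k(x-z_k+s_i\lambda_i^{(k,\boldsymbol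 s)}h)$, $\psi_i^{\boldsymbol s}=\prod_k(x-z_k+s_{i+1}\lambda_{i+1}^{(k,\boldsymbol s)}h)$ over $k$ with $\lambda_i^{(k,\boldsymbol s)}+\lambda_{i+1}^{(k,\boldsymbol s)}\ne0$. With $y_0=y_{m+n}=1$, \[\mathcal E^{\boldsymbol s}_{\boldsymbol y}(x)=\sum_{a=1}^{m+n}s_a\frac{T_a^{\boldsymbol s}}{T_a^{\boldsymbol s}[s_a]}\frac{y_{a-1}[-s_a]}{y_{a-1}}\frac{y_a[s_a]}{y_a}.\] *)

theory Defs
  imports Complex_Main "HOL-Computational_Algebra.Polynomial"
begin

(* All sequences are 1-indexed functions on nat; only indices 1..m+n matter. *)

definition sign_seqs :: "nat \<Rightarrow> nat \<Rightarrow> (nat \<Rightarrow> int) set" where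
  "sign_seqs m n = {s. (\<forall>i\<in>{1..m+n}. s i = 1 \<or> s i = -1) \<and> card {i\<in>{1..m+n}. s i = 1} = m}"

definition cnt_plus :: "(nat \<Rightarrow> int) \<Rightarrow> nat \<Rightarrow> nat" where
  "cnt_plus s i = card {j\<in>{1..i}. s j = 1}"

definition cnt_minus :: "(nat \<Rightarrow> int) \<Rightarrow> nat \<Rightarrow> nat" where
  "cnt_minus s i = card {j\<in>{1..i}. s j = -1}"

definition sigma_s :: "nat \<Rightarrow> (nat \<Rightarrow> int) \<Rightarrow> nat \<Rightarrow> nat" where
  "sigma_s m s i = (if s i = 1 then cnt_plus s i else m + cnt_minus s i)"

definition swap_seq :: "(nat \<Rightarrow> int) \<Rightarrow> nat \<Rightarrow> (nat \<Rightarrow> int)" where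
  "swap_seq s i = s(i := s (i+1), i+1 := s i)"

definition poly_weight :: "nat \<Rightarrow> nat \<Rightarrow> (nat \<Rightarrow> nat) \<Rightarrow> bool" where
  "poly_weight m n lam \<longleftrightarrow>
     (\<forall>i j. 1 \<le> i \<and> i \<le> j \<and> j \<le> m \<longrightarrow> lam j \<le> lam i) \<and>
     (\<forall>i j. m + 1 \<le> i \<and> i \<le> j \<and> j \<le> m + n \<longrightarrow> lam j \<le> lam i) \<and>
     (0 < m \<longrightarrow> (\<forall>k. 1 \<le> k \<and> k \<le> n \<and> lam m < k \<longrightarrow> lam (m + k) = 0))"

text \<open>lambda^s_i, the eigenvalue of e_{sigma_s(i) sigma_s(i)} on the s-highest weight vector of L_lambda,
  given by the standard hook Young diagram description (Cheng--Wang): the hook diagram of lambda has rows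
  r = 1..m of length lambda_r and columns c = 1..n of length #{r \<le> m. lambda_r \<ge> c} + lambda_{m+c}.
  With a = cnt_plus s i, b = cnt_minus s i: if s_i = 1, lambda^s_i is the length of row a to the
  right of column b; if s_i = -1, it is the length of column b below row a.\<close>
definition s_weight :: "nat \<Rightarrow> (nat \<Rightarrow> nat) \<Rightarrow> (nat \<Rightarrow> int) \<Rightarrow> nat \<Rightarrow> nat" where
  "s_weight m lam s i =
     (let a = cnt_plus s i; b = cnt_minus s i in
      if s i = 1 then lam a - b
      else (card {r\<in>{1..m}. b \<le> lam r} + lam (m + b)) - a)"

definition shev :: "complex \<Rightarrow> complex poly \<Rightarrow> int \<Rightarrow> complex \<Rightarrow> complex" where
  "shev h f j x = poly f (x - of_int j * h)"

definition Tfun :: "complex \<Rightarrow> (nat \<Rightarrow> complex) \<Rightarrow> nat \<Rightarrow> nat \<Rightarrow> (nat \<Rightarrow> nat \<Rightarrow> nat)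
                      \<Rightarrow> (nat \<Rightarrow> int) \<Rightarrow> nat \<Rightarrow> complex \<Rightarrow> complex" where
  "Tfun h z p m lam s i x =
     (\<Prod>k\<in>{1..p}. \<Prod>j\<in>{1..s_weight m (lam k) s i}. x - z k + of_int (s i) * of_nat j * h)"

definition phifun :: "complex \<Rightarrow> (nat \<Rightarrow> complex) \<Rightarrow> nat \<Rightarrow> nat \<Rightarrow> (nat \<Rightarrow> nat \<Rightarrow> nat)
                      \<Rightarrow> (nat \<Rightarrow> int) \<Rightarrow> nat \<Rightarrow> complex \<Rightarrow> complex" where
  "phifun h z p m lam s i x =
     (\<Prod>k\<in>{k\<in>{1..p}. s_weight m (lam k) s i + s_weight m (lam k) s (i+1) \<noteq> 0}.
        x - z k + of_int (s i) * of_nat (s_weight m (lam k) s i) * h)"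

definition psifun :: "complex \<Rightarrow> (nat \<Rightarrow> complex) \<Rightarrow> nat \<Rightarrow> nat \<Rightarrow> (nat \<Rightarrow> nat \<Rightarrow> nat)
                      \<Rightarrow> (nat \<Rightarrow> int) \<Rightarrow> nat \<Rightarrow> complex \<Rightarrow> complex" where
  "psifun h z p m lam s i x =
     (\<Prod>k\<in>{k\<in>{1..p}. s_weight m (lam k) s i + s_weight m (lam k) s (i+1) \<noteq> 0}.
        x - z k + of_int (s (i+1)) * of_nat (s_weight m (lam k) s (i+1)) * h)"

definition Yext :: "nat \<Rightarrow> nat \<Rightarrow> (nat \<Rightarrow> complex poly) \<Rightarrow> nat \<Rightarrow> complex poly" where
  "Yext m n y a = (if a = 0 \<or> a = m + n then 1 else y a)"

definition Efun :: "complex \<Rightarrow> (nat \<Rightarrow> complex) \<Rightarrow> nat \<Rightarrow> nat \<Rightarrow> nat \<Rightarrow> (nat \<Rightarrow> nat \<Rightarrow> nat)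
                      \<Rightarrow> (nat \<Rightarrow> int) \<Rightarrow> (nat \<Rightarrow> complex poly) \<Rightarrow> complex \<Rightarrow> complex" where
  "Efun h z p m n lam s y x =
     (\<Sum>a\<in>{1..m+n}. of_int (s a)
        * (Tfun h z p m lam s a x / Tfun h z p m lam s a (x - of_int (s a) * h))
        * (shev h (Yext m n y (a - 1)) (- s a) x / poly (Yext m n y (a - 1)) x)
        * (shev h (Yext m n y a) (s a) x / poly (Yext m n y a) x))"

definition Edef :: "complex \<Rightarrow> (nat \<Rightarrow> complex) \<Rightarrow> nat \<Rightarrow> nat \<Rightarrow> nat \<Rightarrow> (nat \<Rightarrow> nat \<Rightarrow> nat)
                      \<Rightarrow> (nat \<Rightarrow> int) \<Rightarrow> (nat \<Rightarrow> complex poly) \<Rightarrow> complex \<Rightarrow> bool" where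
  "Edef h z p m n lam s y x \<longleftrightarrow>
     (\<forall>a\<in>{1..m+n}. Tfun h z p m lam s a (x - of_int (s a) * h) \<noteq> 0
        \<and> poly (Yext m n y (a - 1)) x \<noteq> 0 \<and> poly (Yext m n y a) x \<noteq> 0)"

end

theory Submission
  imports Defs
begin


lemma card_Suc_filter:
  "card {j\<in>{1..Suc k}. P j} = card {j\<in>{1..k}. P j} + (if P (Suc k) then 1 else 0)"
proof -
  have "{j\<in>{1..Suc k}. P j} = (if P (Suc k) then insert (Suc k) {j\<in>{1..k}. P j} else {j\<in>{1..k}. P j})"
    by (auto simp: le_Suc_eq)
  then show ?thesis by simp
qed

lemma cnt_swap:
  assumes "a < i \<or> i + 1 \<le> a" "1 \<le> i"
  shows "card {j\<in>{1..a}. swap_seq s i j = c} = card {j\<in>{1..a}. s j = c}"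
proof -
  define \<tau> where "\<tau> j = (if j = i then i+1 else if j = i+1 then i else j)" for j
  have "bij_betw \<tau> {j\<in>{1..a}. swap_seq s i j = c} {j\<in>{1..a}. s j = c}"
    by (rule bij_betw_byWitness[where f'=\<tau>]) (use assms in \<open>auto simp: \<tau>_def swap_seq_def split: if_splits\<close>)
  then show ?thesis by (rule bij_betw_same_card)
qed

lemma sw_swap_other:
  assumes "a \<noteq> i" "a \<noteq> i+1" "1 \<le> i"
  shows "s_weight m L (swap_seq s i) a = s_weight m L s a"
proof -
  have sa: "swap_seq s i a = s a" using assms by (simp add: swap_seq_def)
  have "a < i \<or> i+1 \<le> a" using assms by auto
  then have "cnt_plus (swap_seq s i) a = cnt_plus s a" "cnt_minus (swap_seq s i) a = cnt_minus s a"
    unfolding cnt_plus_def cnt_minus_def using cnt_swap[OF _ assms(3)] by blast+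
  then show ?thesis
    unfolding s_weight_def Let_def sa by simp
qed

lemma Tfun_swap_other:
  assumes "a \<noteq> i" "a \<noteq> i+1" "1 \<le> i"
  shows "Tfun h z p m lam (swap_seq s i) a x = Tfun h z p m lam s a x"
proof -
  have sa: "swap_seq s i a = s a" using assms by (simp add: swap_seq_def)
  show ?thesis unfolding Tfun_def sa sw_swap_other[OF assms] ..
qed

lemma cnt_plus_le:
  assumes "s \<in> sign_seqs m n" "a \<le> m+n" shows "cnt_plus s a \<le> m"
proof -
  have "card {j\<in>{1..a}. s j = 1} \<le> card {j\<in>{1..m+n}. s j = 1}"
    by (rule card_mono) (use assms in auto)
  then show ?thesis using assms by (simp add: cnt_plus_def sign_seqs_def)
qed

lemma cnt_minus_le:
  assumes "s \<in> sign_seqs m n" "a \<le> m+n" shows "cnt_minus s a \<le> n"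
proof -
  have "card {j\<in>{1..a}. s j = -1} \<le> card ({1..m+n} - {j\<in>{1..m+n}. s j = 1})"
    by (rule card_mono) (use assms in auto)
  also have "\<dots> = (m+n) - m"
    by (subst card_Diff_subset) (use assms in \<open>auto simp: sign_seqs_def\<close>)
  finally show ?thesis by (simp add: cnt_minus_def)
qed

lemma comb1:
  assumes pw: "poly_weight m n L" and "P0 + 1 \<le> m" and "Q0 + 1 \<le> L (P0+1)"
  shows "P0 + 1 \<le> card {r\<in>{1..m}. Q0+1 \<le> L r}"
proof -
  have "{1..P0+1} \<subseteq> {r\<in>{1..m}. Q0+1 \<le> L r}"
  proof
    fix r assume r: "r \<in> {1..P0+1}"
    then have "L (P0+1) \<le> L r" using pw assms(2) unfolding poly_weight_def by auto
    then show "r \<in> {r\<in>{1..m}. Q0+1 \<le> L r}" using r assms by auto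
  qed
  from card_mono[OF _ this] show ?thesis by simp
qed

lemma comb2:
  assumes pw: "poly_weight m n L" and "P0 + 1 \<le> m" "Q0 + 1 \<le> n" and "L (P0+1) \<le> Q0"
  shows "card {r\<in>{1..m}. Q0+1 \<le> L r} \<le> P0" "L (m + (Q0+1)) = 0"
proof -
  have "{r\<in>{1..m}. Q0+1 \<le> L r} \<subseteq> {1..P0}"
  proof
    fix r assume r: "r \<in> {r\<in>{1..m}. Q0+1 \<le> L r}"
    show "r \<in> {1..P0}"
    proof (rule ccontr)
      assume "r \<notin> {1..P0}"
      then have "P0 + 1 \<le> r" using r by auto
      then have "L r \<le> L (P0+1)" using pw r unfolding poly_weight_def by auto
      then show False using r assms by auto
    qed
  qed
  from card_mono[OF _ this] show "card {r\<in>{1..m}. Q0+1 \<le> L r} \<le> P0" by simp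
  have "L m \<le> L (P0+1)" using pw assms(2) unfolding poly_weight_def by auto
  moreover have "0 < m" using assms by simp
  then have "\<forall>k. 1 \<le> k \<and> k \<le> n \<and> L m < k \<longrightarrow> L (m + k) = 0" using pw unfolding poly_weight_def by blast
  ultimately show "L (m + (Q0+1)) = 0" using assms by force
qed



lemma odd_weights:
  assumes s_in: "s \<in> sign_seqs m n" and i: "1 \<le> i" "i+1 \<le> m+n"
    and odd: "s (i+1) = - s i" and pw: "poly_weight m n L"
  shows "(s_weight m L s i = 0 \<and> s_weight m L s (i+1) = 0 \<and>
          s_weight m L (swap_seq s i) i = 0 \<and> s_weight m L (swap_seq s i) (i+1) = 0) \<or>
         (1 \<le> s_weight m L s i \<and> s_weight m L (swap_seq s i) i = s_weight m L s (i+1) + 1 \<and>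
          s_weight m L (swap_seq s i) (i+1) = s_weight m L s i - 1)"
proof -
  obtain k where k: "i = Suc k" using i by (cases i) auto
  define s' where "s' = swap_seq s i"
  have pm: "s i = 1 \<or> s i = -1" using s_in i unfolding sign_seqs_def by auto
  have s'i: "s' i = s (i+1)" and s'i1: "s' (i+1) = s i" unfolding s'_def swap_seq_def by auto
  define P0 where "P0 = cnt_plus s k"
  define Q0 where "Q0 = cnt_minus s k"
  have c1: "cnt_plus s i = P0 + (if s i = 1 then 1 else 0)"
    "cnt_minus s i = Q0 + (if s i = -1 then 1 else 0)"
    unfolding P0_def Q0_def cnt_plus_def cnt_minus_def k by (rule card_Suc_filter)+
  have c2: "cnt_plus s (i+1) = cnt_plus s i + (if s (i+1) = 1 then 1 else 0)"
    "cnt_minus s (i+1) = cnt_minus s i + (if s (i+1) = -1 then 1 else 0)"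
    unfolding cnt_plus_def cnt_minus_def Suc_eq_plus1[symmetric] by (rule card_Suc_filter)+
  have c3: "cnt_plus s' k = P0" "cnt_minus s' k = Q0"
    unfolding P0_def Q0_def cnt_plus_def cnt_minus_def s'_def
    using cnt_swap[OF _ i(1), of k] k by auto
  have c4: "cnt_plus s' i = P0 + (if s' i = 1 then 1 else 0)"
    "cnt_minus s' i = Q0 + (if s' i = -1 then 1 else 0)"
    unfolding c3[symmetric] cnt_plus_def cnt_minus_def k by (rule card_Suc_filter)+
  have c5: "cnt_plus s' (i+1) = cnt_plus s (i+1)" "cnt_minus s' (i+1) = cnt_minus s (i+1)"
    unfolding cnt_plus_def cnt_minus_def s'_def
    using cnt_swap[OF _ i(1), of "i+1"] by auto
  have bp: "cnt_plus s (i+1) \<le> m" by (rule cnt_plus_le[OF s_in i(2)])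
  have bm: "cnt_minus s (i+1) \<le> n" by (rule cnt_minus_le[OF s_in i(2)])
  define C where "C = card {r\<in>{1..m}. Q0+1 \<le> L r} + L (m + (Q0+1))"
  from pm show ?thesis
  proof
    assume e: "s i = 1"
    then have e2: "s (i+1) = -1" using odd by simp
    have P: "P0 + 1 \<le> m" "Q0 + 1 \<le> n" using bp bm c1 c2 e e2 by auto
    have w: "s_weight m L s i = L (P0+1) - Q0"
      "s_weight m L s (i+1) = C - (P0+1)"
      "s_weight m L s' i = C - P0"
      "s_weight m L s' (i+1) = L (P0+1) - (Q0+1)"
      unfolding s_weight_def Let_def C_def using c1 c2 c4 c5 e e2 s'i s'i1 by auto
    show ?thesis
    proof (cases "Q0 + 1 \<le> L (P0+1)")
      case True
      then have "P0 + 1 \<le> C" using comb1[OF pw P(1) True] unfolding C_def by simp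
      then show ?thesis using w True unfolding s'_def by auto
    next
      case False
      then have "C \<le> P0" using comb2[OF pw P] unfolding C_def by simp
      then show ?thesis using w False unfolding s'_def by auto
    qed
  next
    assume e: "s i = -1"
    then have e2: "s (i+1) = 1" using odd by simp
    have P: "P0 + 1 \<le> m" "Q0 + 1 \<le> n" using bp bm c1 c2 e e2 by auto
    have w: "s_weight m L s i = C - P0"
      "s_weight m L s (i+1) = L (P0+1) - (Q0+1)"
      "s_weight m L s' i = L (P0+1) - Q0"
      "s_weight m L s' (i+1) = C - (P0+1)"
      unfolding s_weight_def Let_def C_def using c1 c2 c4 c5 e e2 s'i s'i1 by auto
    show ?thesis
    proof (cases "Q0 + 1 \<le> L (P0+1)")
      case True
      then have "P0 + 1 \<le> C" using comb1[OF pw P(1) True] unfolding C_def by simp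
      then show ?thesis using w True unfolding s'_def by auto
    next
      case False
      then have "C \<le> P0" using comb2[OF pw P] unfolding C_def by simp
      then show ?thesis using w False unfolding s'_def by auto
    qed
  qed
qed



lemma prod_shift:
  fixes u c :: complex
  shows "(\<Prod>j\<in>{1..w}. u + of_nat j * c) * u = (\<Prod>j\<in>{1..w}. u - c + of_nat j * c) * (u + of_nat w * c)"
proof (induction w)
  case 0 then show ?case by simp
next
  case (Suc w)
  have "(\<Prod>j\<in>{1..Suc w}. u + of_nat j * c) * u = ((\<Prod>j\<in>{1..w}. u + of_nat j * c) * u) * (u + of_nat (Suc w) * c)"
    by (simp add: mult_ac)
  also have "\<dots> = (\<Prod>j\<in>{1..w}. u - c + of_nat j * c) * (u + of_nat w * c) * (u + of_nat (Suc w) * c)"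
    by (simp only: Suc.IH)
  also have "\<dots> = (\<Prod>j\<in>{1..Suc w}. u - c + of_nat j * c) * (u + of_nat (Suc w) * c)"
    by (simp add: algebra_simps)
  finally show ?case .
qed

lemma Tfun_shift:
  assumes K: "K \<subseteq> {1..p}" and zero: "\<forall>k\<in>{1..p}-K. s_weight m (lam k) s a = 0"
  shows "Tfun h z p m lam s a x * (\<Prod>k\<in>K. x - z k)
       = Tfun h z p m lam s a (x - of_int (s a) * h)
         * (\<Prod>k\<in>K. x - z k + of_int (s a) * of_nat (s_weight m (lam k) s a) * h)"
proof -
  have T: "Tfun h z p m lam s a y = (\<Prod>k\<in>K. \<Prod>j\<in>{1..s_weight m (lam k) s a}. y - z k + of_int (s a) * of_nat j * h)" for y
    unfolding Tfun_def by (rule prod.mono_neutral_right) (use K zero in auto)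
  have "(\<Prod>j\<in>{1..s_weight m (lam k) s a}. x - z k + of_int (s a) * of_nat j * h) * (x - z k)
     = (\<Prod>j\<in>{1..s_weight m (lam k) s a}. x - of_int (s a) * h - z k + of_int (s a) * of_nat j * h)
       * (x - z k + of_int (s a) * of_nat (s_weight m (lam k) s a) * h)" for k
    using prod_shift[of "x - z k" "of_int (s a) * h" "s_weight m (lam k) s a"]
    by (simp add: algebra_simps)
  then show ?thesis unfolding T prod.distrib[symmetric] by (rule prod.cong[OF refl])
qed

lemma Tfun_nz:
  assumes "Tfun h z p m lam s a (x - of_int (s a) * h) \<noteq> 0" "k \<in> {1..p}" "1 \<le> s_weight m (lam k) s a"
  shows "x - z k \<noteq> 0"
proof -
  have "(\<Prod>j\<in>{1..s_weight m (lam k) s a}. x - of_int (s a) * h - z k + of_int (s a) * of_nat j * h) \<noteq> 0"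
    using assms(1,2) unfolding Tfun_def by (simp add: prod_zero_iff)
  then have "\<forall>j\<in>{1..s_weight m (lam k) s a}. x - of_int (s a) * h - z k + of_int (s a) * of_nat j * h \<noteq> 0"
    by (simp add: prod_zero_iff)
  then have "x - of_int (s a) * h - z k + of_int (s a) * of_nat 1 * h \<noteq> 0"
    using assms(3) by (meson atLeastAtMost_iff order_refl)
  then show ?thesis by simp
qed



lemma odd_alg:
  fixes e Ti Tim Tj Tjp Tpi Tpip Tpj Tpjm U Phi Psi Phim Psim yv ym yt ytp Y0 Y0p Y0m Y2 Y2p Y2m :: complex
  assumes "Ti * U = Tim * Phi" "Tj * U = Tjp * Psi" "Tpi * U = Tpip * Psim" "Tpj * U = Tpjm * Phim"
    "yv * ytp = Phi * Y0p * Y2 - Psi * Y0 * Y2p"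
    "ym * yt = Phim * Y0 * Y2m - Psim * Y0m * Y2"
    "U \<noteq> 0" "Tim \<noteq> 0" "Tjp \<noteq> 0" "Tpip \<noteq> 0" "Tpjm \<noteq> 0" "yv \<noteq> 0" "yt \<noteq> 0" "Y0 \<noteq> 0" "Y2 \<noteq> 0"
  shows "e * (Ti/Tim) * (Y0p/Y0) * (ym/yv) + (-e) * (Tj/Tjp) * (ym/yv) * (Y2p/Y2)
       = (-e) * (Tpi/Tpip) * (Y0m/Y0) * (ytp/yt) + e * (Tpj/Tpjm) * (ytp/yt) * (Y2m/Y2)"
proof -
  have a: "Ti/Tim = Phi/U" "Tj/Tjp = Psi/U" "Tpi/Tpip = Psim/U" "Tpj/Tpjm = Phim/U"
    using assms(1-4,7-11) by (simp_all add: field_simps)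
  have "e * (Ti/Tim) * (Y0p/Y0) * (ym/yv) + (-e) * (Tj/Tjp) * (ym/yv) * (Y2p/Y2)
      = e * ym * (yv * ytp) / (U * Y0 * Y2 * yv)"
    unfolding a assms(5) using assms(7-15) by (simp add: field_simps)
  also have "\<dots> = e * ytp * (ym * yt) / (U * Y0 * Y2 * yt)"
    using assms(7-15) by (simp add: field_simps)
  also have "\<dots> = (-e) * (Tpi/Tpip) * (Y0m/Y0) * (ytp/yt) + e * (Tpj/Tpjm) * (ytp/yt) * (Y2m/Y2)"
    unfolding a assms(6) using assms(7-15) by (simp add: field_simps)
  finally show ?thesis .
qed

lemma even_alg:
  fixes e Ti Tim Tj Tjm yv yp ym yt ytp ytm Y0 Y0p Y2 Y2m :: complex
  assumes "Tj * (yv * ytp - yt * yp) = Ti * Y0p * Y2"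
    "Tjm * (ym * yt - ytm * yv) = Tim * Y0 * Y2m"
    "Tim \<noteq> 0" "Tjm \<noteq> 0" "yv \<noteq> 0" "yt \<noteq> 0" "Y0 \<noteq> 0" "Y2 \<noteq> 0"
  shows "e*(Ti/Tim)*(Y0p/Y0)*(ym/yv) + e*(Tj/Tjm)*(yp/yv)*(Y2m/Y2)
       = e*(Ti/Tim)*(Y0p/Y0)*(ytm/yt) + e*(Tj/Tjm)*(ytp/yt)*(Y2m/Y2)"
proof -
  have "e*(Ti/Tim)*(Y0p/Y0)*(ym/yv) + e*(Tj/Tjm)*(yp/yv)*(Y2m/Y2)
       - (e*(Ti/Tim)*(Y0p/Y0)*(ytm/yt) + e*(Tj/Tjm)*(ytp/yt)*(Y2m/Y2))
     = e * Ti * Y0p * (Tjm * (ym * yt - ytm * yv)) / (Tim * Y0 * Tjm * yv * yt)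
       - e * Y2m * (Tj * (yv * ytp - yt * yp)) / (Tjm * Y2 * yv * yt)"
    using assms(3-8) by (simp add: field_simps)
  also have "\<dots> = 0" unfolding assms(1,2) using assms(3-8) by (simp add: field_simps)
  finally show ?thesis by simp
qed



definition Eterm where
  "Eterm h z p m n lam s y x a = of_int (s a)
        * (Tfun h z p m lam s a x / Tfun h z p m lam s a (x - of_int (s a) * h))
        * (shev h (Yext m n y (a - 1)) (- s a) x / poly (Yext m n y (a - 1)) x)
        * (shev h (Yext m n y a) (s a) x / poly (Yext m n y a) x)"

lemma Efun_Eterm: "Efun h z p m n lam s y x = (\<Sum>a\<in>{1..m+n}. Eterm h z p m n lam s y x a)"
  unfolding Efun_def Eterm_def ..

lemma sum_split2:
  fixes N i :: nat
  assumes "1 \<le> i" "i+1 \<le> N"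
  shows "(\<Sum>a\<in>{1..N}. g a) = (\<Sum>a\<in>{1..N}-{i,i+1}. g a) + g i + g (i+1)"
proof -
  have "(\<Sum>a\<in>{1..N}. g a) = g i + (\<Sum>a\<in>{1..N}-{i}. g a)"
    using assms by (intro sum.remove) auto
  also have "(\<Sum>a\<in>{1..N}-{i}. g a) = g (i+1) + (\<Sum>a\<in>{1..N}-{i}-{i+1}. g a)"
    using assms by (intro sum.remove) auto
  also have "{1..N}-{i}-{i+1} = {1..N}-{i,i+1}" by auto
  finally show ?thesis by (simp add: algebra_simps)
qed



theorem lemma5p5:
  fixes h :: complex and m n p i :: nat and z :: "nat \<Rightarrow> complex"
    and lam :: "nat \<Rightarrow> nat \<Rightarrow> nat" and s :: "nat \<Rightarrow> int"
    and y :: "nat \<Rightarrow> complex poly" and yt :: "complex poly"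
  assumes hne: "h \<noteq> 0"
    and weights: "\<forall>k\<in>{1..p}. poly_weight m n (lam k)"
    and generic: "\<forall>k\<in>{1..p}. \<forall>l\<in>{1..p}. k \<noteq> l \<longrightarrow> (\<forall>j::int. z k - z l \<noteq> of_int j * h)"
    and s_in: "s \<in> sign_seqs m n"
    and i_range: "1 \<le> i" "i \<le> m + n - 1"
    and even_case: "s i = s (i+1) \<longrightarrow>
      (\<forall>x. Tfun h z p m lam s (i+1) x
             * (poly (y i) x * shev h yt (- s i) x - poly yt x * shev h (y i) (- s i) x)
           = Tfun h z p m lam s i x * shev h (Yext m n y (i - 1)) (- s i) x
             * poly (Yext m n y (i + 1)) x)"
    and odd_case: "s i = - s (i+1) \<longrightarrow>
      (\<forall>x. poly (y i) x * shev h yt (- s i) x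
           = phifun h z p m lam s i x * shev h (Yext m n y (i - 1)) (- s i) x
               * poly (Yext m n y (i + 1)) x
             - psifun h z p m lam s i x * poly (Yext m n y (i - 1)) x
               * shev h (Yext m n y (i + 1)) (- s i) x)"
  shows "\<forall>x. Edef h z p m n lam s y x
              \<and> Edef h z p m n lam (if s i = s (i+1) then s else swap_seq s i) (y(i := yt)) x
           \<longrightarrow> Efun h z p m n lam s y x
               = Efun h z p m n lam (if s i = s (i+1) then s else swap_seq s i) (y(i := yt)) x"
proof (intro allI impI)
  fix x
  assume H: "Edef h z p m n lam s y x
              \<and> Edef h z p m n lam (if s i = s (i+1) then s else swap_seq s i) (y(i := yt)) x"
  have i1: "1 \<le> i" "i + 1 \<le> m + n" using i_range by auto
  let ?y' = "y(i := yt)"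
  let ?Y0 = "Yext m n y (i - 1)"
  let ?Y2 = "Yext m n y (i + 1)"
  have Yi: "Yext m n ?y' i = yt" "Yext m n y i = y i" using i1 by (auto simp: Yext_def)
  have Yo: "Yext m n ?y' b = Yext m n y b" if "b \<noteq> i" for b using that by (simp add: Yext_def)
  have Y0': "Yext m n ?y' (i - 1) = ?Y0" and Y2': "Yext m n ?y' (i + 1) = ?Y2" using i1 by (auto intro: Yo)
  have pm: "s i = 1 \<or> s i = -1" "s (i+1) = 1 \<or> s (i+1) = -1"
    using s_in i1 unfolding sign_seqs_def by auto
  define e where "e = (of_int (s i) :: complex)"
  have sh1: "shev h f (s i) x = poly f (x - e*h)" for f unfolding e_def shev_def by simp
  have sh2: "shev h f (- s i) (x - e*h) = poly f x" for f unfolding e_def shev_def by simp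
  have sh3: "shev h f (- s i) x = poly f (x + e*h)" for f unfolding e_def shev_def by simp
  have EA: "\<forall>a\<in>{1..m+n}. Tfun h z p m lam s a (x - of_int (s a) * h) \<noteq> 0
        \<and> poly (Yext m n y (a - 1)) x \<noteq> 0 \<and> poly (Yext m n y a) x \<noteq> 0"
    using H unfolding Edef_def by blast
  have Ai: "Tfun h z p m lam s i (x - e * h) \<noteq> 0" "poly ?Y0 x \<noteq> 0" "poly (y i) x \<noteq> 0"
  proof -
    have "Tfun h z p m lam s i (x - of_int (s i) * h) \<noteq> 0 \<and> poly ?Y0 x \<noteq> 0 \<and> poly (Yext m n y i) x \<noteq> 0"
      using EA i1 by auto
    then show "Tfun h z p m lam s i (x - e * h) \<noteq> 0" "poly ?Y0 x \<noteq> 0" "poly (y i) x \<noteq> 0"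
      using Yi unfolding e_def by auto
  qed
  have Ai1: "Tfun h z p m lam s (i+1) (x - of_int (s (i+1)) * h) \<noteq> 0" "poly ?Y2 x \<noteq> 0"
    using EA i1 by auto
  show "Efun h z p m n lam s y x
      = Efun h z p m n lam (if s i = s (i+1) then s else swap_seq s i) ?y' x"
  proof (cases "s i = s (i+1)")
    case True
    have E2: "Edef h z p m n lam s ?y' x" using H True by simp
    have yt0: "poly yt x \<noteq> 0" using E2 i1 Yi unfolding Edef_def by force
    have rest: "(\<Sum>a\<in>{1..m+n}-{i,i+1}. Eterm h z p m n lam s y x a)
        = (\<Sum>a\<in>{1..m+n}-{i,i+1}. Eterm h z p m n lam s ?y' x a)"
    proof (rule sum.cong[OF refl])
      fix a assume a: "a \<in> {1..m+n}-{i,i+1}"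
      then have "a - 1 \<noteq> i" "a \<noteq> i" by auto
      then show "Eterm h z p m n lam s y x a = Eterm h z p m n lam s ?y' x a"
        unfolding Eterm_def by (simp add: Yo)
    qed
    have t1: "Eterm h z p m n lam s y x i = e * (Tfun h z p m lam s i x / Tfun h z p m lam s i (x - e*h))
        * (shev h ?Y0 (- s i) x / poly ?Y0 x) * (poly (y i) (x - e*h) / poly (y i) x)"
      unfolding Eterm_def e_def[symmetric] sh1 Yi ..
    have t2: "Eterm h z p m n lam s y x (i+1) = e * (Tfun h z p m lam s (i+1) x / Tfun h z p m lam s (i+1) (x - e*h))
        * (shev h (y i) (- s i) x / poly (y i) x) * (poly ?Y2 (x - e*h) / poly ?Y2 x)"
      unfolding Eterm_def True[symmetric] e_def[symmetric] sh1 using Yi by simp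
    have t3: "Eterm h z p m n lam s ?y' x i = e * (Tfun h z p m lam s i x / Tfun h z p m lam s i (x - e*h))
        * (shev h ?Y0 (- s i) x / poly ?Y0 x) * (poly yt (x - e*h) / poly yt x)"
      unfolding Eterm_def e_def[symmetric] sh1 Yi Y0' ..
    have t4: "Eterm h z p m n lam s ?y' x (i+1) = e * (Tfun h z p m lam s (i+1) x / Tfun h z p m lam s (i+1) (x - e*h))
        * (shev h yt (- s i) x / poly yt x) * (poly ?Y2 (x - e*h) / poly ?Y2 x)"
      unfolding Eterm_def True[symmetric] e_def[symmetric] sh1 using Yi Y2' by simp
    have hx: "Tfun h z p m lam s (i+1) x
             * (poly (y i) x * shev h yt (- s i) x - poly yt x * shev h (y i) (- s i) x)
           = Tfun h z p m lam s i x * shev h ?Y0 (- s i) x * poly ?Y2 x"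
      using even_case True by blast
    have hxm: "Tfun h z p m lam s (i+1) (x - e*h)
             * (poly (y i) (x - e*h) * poly yt x - poly yt (x - e*h) * poly (y i) x)
           = Tfun h z p m lam s i (x - e*h) * poly ?Y0 x * poly ?Y2 (x - e*h)"
      using even_case True sh2 by metis
    have Tjm: "Tfun h z p m lam s (i+1) (x - e*h) \<noteq> 0" using Ai1 True unfolding e_def by simp
    have key: "Eterm h z p m n lam s y x i + Eterm h z p m n lam s y x (i+1)
        = Eterm h z p m n lam s ?y' x i + Eterm h z p m n lam s ?y' x (i+1)"
      unfolding t1 t2 t3 t4 by (rule even_alg[OF hx hxm Ai(1) Tjm Ai(3) yt0 Ai(2) Ai1(2)])
    show ?thesis using True
      unfolding Efun_Eterm sum_split2[OF i1] using rest key by simp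
  next
    case False
    then have odd: "s (i+1) = - s i" using pm by auto
    define s' where "s' = swap_seq s i"
    have sw: "(if s i = s (i+1) then s else swap_seq s i) = s'" using False s'_def by simp
    have E2: "Edef h z p m n lam s' ?y' x" using H sw by simp
    have s'i: "s' i = - s i" "s' (i+1) = s i" unfolding s'_def swap_seq_def using odd by auto
    have yt0: "poly yt x \<noteq> 0" using E2 i1 Yi unfolding Edef_def by force
    have EB: "\<forall>a\<in>{1..m+n}. Tfun h z p m lam s' a (x - of_int (s' a) * h) \<noteq> 0"
      using E2 unfolding Edef_def by blast
    have Tpip: "Tfun h z p m lam s' i (x + e*h) \<noteq> 0"
      using EB i1 s'i unfolding e_def by force
    have Tpjm: "Tfun h z p m lam s' (i+1) (x - e*h) \<noteq> 0"
      using EB i1 s'i unfolding e_def by force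
    have Tjp: "Tfun h z p m lam s (i+1) (x + e*h) \<noteq> 0"
      using Ai1 odd unfolding e_def by simp
    have rest: "(\<Sum>a\<in>{1..m+n}-{i,i+1}. Eterm h z p m n lam s y x a)
        = (\<Sum>a\<in>{1..m+n}-{i,i+1}. Eterm h z p m n lam s' ?y' x a)"
    proof (rule sum.cong[OF refl])
      fix a assume a: "a \<in> {1..m+n}-{i,i+1}"
      then have "a - 1 \<noteq> i" "a \<noteq> i" "a \<noteq> i+1" by auto
      moreover then have "s' a = s a" unfolding s'_def swap_seq_def by simp
      moreover have "Tfun h z p m lam s' a = Tfun h z p m lam s a"
        using Tfun_swap_other[OF \<open>a \<noteq> i\<close> \<open>a \<noteq> i+1\<close> i1(1)] unfolding s'_def by blast
      ultimately show "Eterm h z p m n lam s y x a = Eterm h z p m n lam s' ?y' x a"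
        unfolding Eterm_def by (simp add: Yo)
    qed

    have t1: "Eterm h z p m n lam s y x i = e * (Tfun h z p m lam s i x / Tfun h z p m lam s i (x - e*h))
        * (shev h ?Y0 (- s i) x / poly ?Y0 x) * (poly (y i) (x - e*h) / poly (y i) x)"
      unfolding Eterm_def e_def[symmetric] sh1 Yi ..
    have t2: "Eterm h z p m n lam s y x (i+1) = (-e) * (Tfun h z p m lam s (i+1) x / Tfun h z p m lam s (i+1) (x + e*h))
        * (poly (y i) (x - e*h) / poly (y i) x) * (shev h ?Y2 (- s i) x / poly ?Y2 x)"
      using Yi odd by (simp add: Eterm_def e_def sh1)
    have t3: "Eterm h z p m n lam s' ?y' x i = (-e) * (Tfun h z p m lam s' i x / Tfun h z p m lam s' i (x + e*h))
        * (poly ?Y0 (x - e*h) / poly ?Y0 x) * (shev h yt (- s i) x / poly yt x)"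
      using Yi Y0' by (simp add: Eterm_def s'i e_def sh1)
    have t4: "Eterm h z p m n lam s' ?y' x (i+1) = e * (Tfun h z p m lam s' (i+1) x / Tfun h z p m lam s' (i+1) (x - e*h))
        * (shev h yt (- s i) x / poly yt x) * (poly ?Y2 (x - e*h) / poly ?Y2 x)"
      using Yi Y2' s'i by (simp add: Eterm_def e_def sh1)
    have hx: "poly (y i) x * shev h yt (- s i) x
           = phifun h z p m lam s i x * shev h ?Y0 (- s i) x * poly ?Y2 x
             - psifun h z p m lam s i x * poly ?Y0 x * shev h ?Y2 (- s i) x"
      using odd_case odd by auto
    have hxm: "poly (y i) (x - e*h) * poly yt x
           = phifun h z p m lam s i (x - e*h) * poly ?Y0 x * poly ?Y2 (x - e*h)
             - psifun h z p m lam s i (x - e*h) * poly ?Y0 (x - e*h) * poly ?Y2 x"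
    proof -
      have "s i = - s (i+1)" using odd by simp
      then have "poly (y i) (x - e*h) * shev h yt (- s i) (x - e*h)
           = phifun h z p m lam s i (x - e*h) * shev h ?Y0 (- s i) (x - e*h) * poly ?Y2 (x - e*h)
             - psifun h z p m lam s i (x - e*h) * poly ?Y0 (x - e*h) * shev h ?Y2 (- s i) (x - e*h)"
        using odd_case by blast
      then show ?thesis unfolding sh2 .
    qed
    define K where "K = {k\<in>{1..p}. s_weight m (lam k) s i + s_weight m (lam k) s (i+1) \<noteq> 0}"
    define U where "U = (\<Prod>k\<in>K. x - z k)"
    have Ksub: "K \<subseteq> {1..p}" unfolding K_def by auto
    have ow: "(s_weight m (lam k) s i = 0 \<and> s_weight m (lam k) s (i+1) = 0 \<and>
          s_weight m (lam k) s' i = 0 \<and> s_weight m (lam k) s' (i+1) = 0) \<or>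
         (1 \<le> s_weight m (lam k) s i \<and> s_weight m (lam k) s' i = s_weight m (lam k) s (i+1) + 1 \<and>
          s_weight m (lam k) s' (i+1) = s_weight m (lam k) s i - 1)" if "k \<in> {1..p}" for k
      unfolding s'_def by (rule odd_weights[OF s_in i1 odd]) (use weights that in blast)
    have inK: "1 \<le> s_weight m (lam k) s i \<and> s_weight m (lam k) s' i = s_weight m (lam k) s (i+1) + 1 \<and>
          s_weight m (lam k) s' (i+1) = s_weight m (lam k) s i - 1" if "k \<in> K" for k
      using ow[of k] that unfolding K_def by auto
    have outK: "s_weight m (lam k) s i = 0 \<and> s_weight m (lam k) s (i+1) = 0 \<and>
          s_weight m (lam k) s' i = 0 \<and> s_weight m (lam k) s' (i+1) = 0" if "k \<in> {1..p} - K" for k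
      using ow[of k] that unfolding K_def by auto
    have r1: "Tfun h z p m lam s i x * U = Tfun h z p m lam s i (x - e*h) * phifun h z p m lam s i x"
      using Tfun_shift[OF Ksub, of m lam s i h z x] outK
      unfolding U_def phifun_def K_def[symmetric] e_def by blast
    have r2: "Tfun h z p m lam s (i+1) x * U = Tfun h z p m lam s (i+1) (x + e*h) * psifun h z p m lam s i x"
    proof -
      have "Tfun h z p m lam s (i+1) x * U = Tfun h z p m lam s (i+1) (x - of_int (s (i+1)) * h) * psifun h z p m lam s i x"
        using Tfun_shift[OF Ksub, of m lam s "i+1" h z x] outK
        unfolding U_def psifun_def K_def[symmetric] by blast
      then show ?thesis using odd unfolding e_def by simp
    qed
    have r3: "Tfun h z p m lam s' i x * U = Tfun h z p m lam s' i (x + e*h) * psifun h z p m lam s i (x - e*h)"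
    proof -
      have "Tfun h z p m lam s' i x * U = Tfun h z p m lam s' i (x - of_int (s' i) * h)
          * (\<Prod>k\<in>K. x - z k + of_int (s' i) * of_nat (s_weight m (lam k) s' i) * h)"
        using Tfun_shift[OF Ksub, of m lam s' i h z x] outK unfolding U_def by blast
      also have "(\<Prod>k\<in>K. x - z k + of_int (s' i) * of_nat (s_weight m (lam k) s' i) * h)
          = psifun h z p m lam s i (x - e*h)"
        unfolding psifun_def K_def[symmetric]
      proof (rule prod.cong[OF refl])
        fix k assume "k \<in> K"
        then show "x - z k + of_int (s' i) * of_nat (s_weight m (lam k) s' i) * h
          = x - e * h - z k + of_int (s (i + 1)) * of_nat (s_weight m (lam k) s (i + 1)) * h"
          using inK[of k] odd s'i unfolding e_def by (simp add: algebra_simps)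
      qed
      finally show ?thesis using s'i unfolding e_def by simp
    qed
    have r4: "Tfun h z p m lam s' (i+1) x * U = Tfun h z p m lam s' (i+1) (x - e*h) * phifun h z p m lam s i (x - e*h)"
    proof -
      have "Tfun h z p m lam s' (i+1) x * U = Tfun h z p m lam s' (i+1) (x - of_int (s' (i+1)) * h)
          * (\<Prod>k\<in>K. x - z k + of_int (s' (i+1)) * of_nat (s_weight m (lam k) s' (i+1)) * h)"
        using Tfun_shift[OF Ksub, of m lam s' "i+1" h z x] outK unfolding U_def by blast
      also have "(\<Prod>k\<in>K. x - z k + of_int (s' (i+1)) * of_nat (s_weight m (lam k) s' (i+1)) * h)
          = phifun h z p m lam s i (x - e*h)"
        unfolding phifun_def K_def[symmetric]
      proof (rule prod.cong[OF refl])
        fix k assume "k \<in> K"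
        then have "1 \<le> s_weight m (lam k) s i" "s_weight m (lam k) s' (i+1) = s_weight m (lam k) s i - 1"
          using inK[of k] by auto
        then have W: "(of_nat (s_weight m (lam k) s' (i+1)) :: complex) = of_nat (s_weight m (lam k) s i) - 1"
          by (simp add: of_nat_diff)
        show "x - z k + of_int (s' (i+1)) * of_nat (s_weight m (lam k) s' (i+1)) * h
          = x - e * h - z k + of_int (s i) * of_nat (s_weight m (lam k) s i) * h"
          unfolding W s'i(2) e_def by (simp add: algebra_simps)
      qed
      finally show ?thesis using s'i unfolding e_def by simp
    qed
    have U0: "U \<noteq> 0"
      unfolding U_def
    proof (subst prod_zero_iff)
      show "finite K" using Ksub finite_subset by blast
      show "\<not> (\<exists>k\<in>K. x - z k = 0)"
      proof
        assume "\<exists>k\<in>K. x - z k = 0"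
        then obtain k where k: "k \<in> K" "x - z k = 0" by blast
        have "x - z k \<noteq> 0"
          by (rule Tfun_nz[of h z p m lam s i x k]) (use Ai(1) k Ksub inK[of k] e_def in auto)
        then show False using k by simp
      qed
    qed
    have key: "Eterm h z p m n lam s y x i + Eterm h z p m n lam s y x (i+1)
        = Eterm h z p m n lam s' ?y' x i + Eterm h z p m n lam s' ?y' x (i+1)"
      unfolding t1 t2 t3 t4
      by (rule odd_alg[OF r1 r2 r3 r4 hx hxm U0 Ai(1) Tjp Tpip Tpjm Ai(3) yt0 Ai(2) Ai1(2)])
    show ?thesis unfolding sw
      unfolding Efun_Eterm sum_split2[OF i1] using rest key by simp
  qed
qed


end
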